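(* Let $X$ be any object of $\mathsf{SquaMS}$, let $m\in M$ and $x,y\in X$. Then every finite path $(m,x)=z_0,z_1,\dots,z_k=(m,y)$ in $M\times X$ has score at least $\frac13 d_X(x,y)$.
   Context: Let $M_0=\{(r,s)\in[0,1]^2: r\in\{0,1\}\text{ or } s\in\{0,1\}\}$. A square metric space is a pair $(X,S_X)$ with $X$ a metric space with all distances at most $2$ and $S_X\colon M_0\to X$ injective such that (sq1) for $i\in\{0,1\}$, $r,s\in[0,1]$: $d_X(S_X(i,r),S_X(i,s))=|s-r|$ and $d_X(S_X(r,i),S_X(s,i))=|s-r|$; (sq2) $d_X(S_X(r,s),S_X(t,u))\ge|r-t|+|s-u|$; $\mathsf{SquaMS}$ is the category of these. Let $N=\{0,1,2\}^2$, $M=N\setminus\{(1,1)\}$, also viewed as points of $\mathbb{R}^2$. Let $\sim$ be the equivalence relation on $M\times X$ generated by $(m,S_X(p))\sim(n,S_X(q))$ whenever $m,n\in M$ differ by exactly $1$ in exactly one coordinate and $(m+p)/3=(n+q)/3$. On $M\times X$ let $d((a,u),(b,v))=\frac13 d_X(u,v)$ if $a=b$ and $2$ otherwise. The score of a finite path $z_0,\dots,z_k$ in $M\times X$ is $\sum_{i<k}c_i$, where $c_i=0$ if $z_i\sim z_{i+1}$ and $c_i=d(z_i,z_{i+1})$ otherwise. *)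

theory Defs
  imports Main "HOL-Library.Library" 
begin

definition M0 :: "(real \<times> real) set" where
  "M0 = {(r, s). 0 \<le> r \<and> r \<le> 1 \<and> 0 \<le> s \<and> s \<le> 1 \<and> (r \<in> {0, 1} \<or> s \<in> {0, 1})}"

text \<open>A square metric space: the metric space is the type 'a (class metric_space),
  S is the map from M0 (values of S outside M0 are irrelevant).\<close>
definition square_metric_space :: "(real \<times> real \<Rightarrow> 'a::metric_space) \<Rightarrow> bool" where
  "square_metric_space S \<longleftrightarrow>
     (\<forall>x y :: 'a. dist x y \<le> 2) \<and>
     inj_on S M0 \<and>
     (\<forall>i\<in>{0, 1}. \<forall>r\<in>{0..1}. \<forall>s\<in>{0..1}.
        dist (S (i, r)) (S (i, s)) = \<bar>s - r\<bar> \<and> dist (S (r, i)) (S (s, i)) = \<bar>s - r\<bar>) \<and>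
     (\<forall>p\<in>M0. \<forall>q\<in>M0. dist (S p) (S q) \<ge> \<bar>fst p - fst q\<bar> + \<bar>snd p - snd q\<bar>)"

definition Nset :: "(int \<times> int) set" where
  "Nset = {0, 1, 2} \<times> {0, 1, 2}"

definition Mset :: "(int \<times> int) set" where
  "Mset = Nset - {(1, 1)}"

definition adjacent :: "int \<times> int \<Rightarrow> int \<times> int \<Rightarrow> bool" where
  "adjacent m n \<longleftrightarrow>
     (\<bar>fst m - fst n\<bar> = 1 \<and> snd m = snd n) \<or> (fst m = fst n \<and> \<bar>snd m - snd n\<bar> = 1)"

definition glue_gen :: "(real \<times> real \<Rightarrow> 'a) \<Rightarrow> ((int \<times> int) \<times> 'a) rel" where
  "glue_gen S = {((m, u), (n, v)). m \<in> Mset \<and> n \<in> Mset \<and> adjacent m n \<and>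
     (\<exists>p\<in>M0. \<exists>q\<in>M0. u = S p \<and> v = S q \<and>
        (real_of_int (fst m) + fst p) / 3 = (real_of_int (fst n) + fst q) / 3 \<and>
        (real_of_int (snd m) + snd p) / 3 = (real_of_int (snd n) + snd q) / 3)}"

definition glue_equiv :: "(real \<times> real \<Rightarrow> 'a) \<Rightarrow> ((int \<times> int) \<times> 'a) rel" where
  "glue_equiv S = (glue_gen S \<union> (glue_gen S)\<inverse>)\<^sup>*"

definition dM :: "(int \<times> int) \<times> 'a::metric_space \<Rightarrow> (int \<times> int) \<times> 'a \<Rightarrow> real" where
  "dM z w = (if fst z = fst w then dist (snd z) (snd w) / 3 else 2)"

definition step_cost :: "(real \<times> real \<Rightarrow> 'a::metric_space) \<Rightarrow>
    (int \<times> int) \<times> 'a \<Rightarrow> (int \<times> int) \<times> 'a \<Rightarrow> real" where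
  "step_cost S z w = (if (z, w) \<in> glue_equiv S then 0 else dM z w)"

definition score :: "(real \<times> real \<Rightarrow> 'a::metric_space) \<Rightarrow> ((int \<times> int) \<times> 'a) list \<Rightarrow> real" where
  "score S zs = (\<Sum>i < length zs - 1. step_cost S (zs ! i) (zs ! Suc i))"

end

theory Submission
  imports Defs
begin

definition faces :: "int \<times> int \<Rightarrow> int \<times> int \<Rightarrow> real \<times> real \<Rightarrow> bool" where
  "faces m n0 p \<longleftrightarrow> p \<in> M0 \<and> 0 \<le> fst p - of_int (fst n0 - fst m) \<and> fst p - of_int (fst n0 - fst m) \<le> 1
     \<and> 0 \<le> snd p - of_int (snd n0 - snd m) \<and> snd p - of_int (snd n0 - snd m) \<le> 1"

definition dotp :: "int \<times> int \<Rightarrow> int \<times> int \<Rightarrow> int \<times> int \<Rightarrow> int" where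
  "dotp m a b = (fst a - fst m) * (fst b - fst m) + (snd a - snd m) * (snd b - snd m)"

definition l1 :: "real \<times> real \<Rightarrow> real \<times> real \<Rightarrow> real" where
  "l1 P Q = \<bar>fst P - fst Q\<bar> + \<bar>snd P - snd Q\<bar>"

definition tpos :: "int \<times> int \<Rightarrow> real \<times> real \<Rightarrow> real \<times> real" where
  "tpos n q = (of_int (fst n) + fst q, of_int (snd n) + snd q)"

lemma far_int:
  fixes a b c d e f g h :: int
  assumes "0 \<le> a" "a \<le> 2" "0 \<le> b" "b \<le> 2" "\<not> (a = 1 \<and> b = 1)"
    "0 \<le> c" "c \<le> 2" "0 \<le> d" "d \<le> 2" "\<not> (c = 1 \<and> d = 1)"
    "0 \<le> e" "e \<le> 2" "0 \<le> f" "f \<le> 2" "\<not> (e = 1 \<and> f = 1)"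
    "0 \<le> g" "g \<le> 2" "0 \<le> h" "h \<le> 2" "\<not> (g = 1 \<and> h = 1)"
    "(\<bar>a - g\<bar> = 1 \<and> b = h) \<or> (a = g \<and> \<bar>b - h\<bar> = 1)"
    "(\<bar>c - e\<bar> = 1 \<and> d = f) \<or> (c = e \<and> \<bar>d - f\<bar> = 1)"
    "\<not> (c = a \<and> d = b)"
    "(c - a) * (g - a) + (d - b) * (h - b) \<ge> 0"
    "(e - a) * (g - a) + (f - b) * (h - b) < 0"
  shows "(g - a = 1 \<and> e = c - 1 \<and> c = a \<and> \<bar>d - b\<bar> = 2 \<and> f = d) \<or>
         (g - a = -1 \<and> e = c + 1 \<and> c = a \<and> \<bar>d - b\<bar> = 2 \<and> f = d) \<or>
         (h - b = 1 \<and> f = d - 1 \<and> d = b \<and> \<bar>c - a\<bar> = 2 \<and> e = c) \<or>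
         (h - b = -1 \<and> f = d + 1 \<and> d = b \<and> \<bar>c - a\<bar> = 2 \<and> e = c)"
proof -
  have A: "(g = a + 1 \<and> h = b) \<or> (g = a - 1 \<and> h = b) \<or> (g = a \<and> h = b + 1) \<or> (g = a \<and> h = b - 1)"
    using assms(21) by arith
  have B: "(e = c + 1 \<and> f = d) \<or> (e = c - 1 \<and> f = d) \<or> (e = c \<and> f = d + 1) \<or> (e = c \<and> f = d - 1)"
    using assms(22) by arith
  from A B show ?thesis using assms(1-20,23-25)
    apply (elim disjE conjE)
    apply (simp_all add: algebra_simps)
    done
qed

lemma sms_facts:
  fixes S :: "real \<times> real \<Rightarrow> 'a::metric_space" and a b :: 'a
  assumes "square_metric_space S"
  shows "dist a b \<le> 2"
    and "\<And>i r s. i \<in> {0,1} \<Longrightarrow> r \<in> {0..1} \<Longrightarrow> s \<in> {0..1} \<Longrightarrow> dist (S (i, r)) (S (i, s)) = \<bar>s - r\<bar>"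
    and "\<And>i r s. i \<in> {0,1} \<Longrightarrow> r \<in> {0..1} \<Longrightarrow> s \<in> {0..1} \<Longrightarrow> dist (S (r, i)) (S (s, i)) = \<bar>s - r\<bar>"
    and "\<And>p q. p \<in> M0 \<Longrightarrow> q \<in> M0 \<Longrightarrow> dist (S p) (S q) \<ge> l1 p q"
  using assms unfolding square_metric_space_def l1_def
  apply -
  apply blast
  apply blast
  apply blast
  apply (auto simp: l1_def)
  done

lemma M0_bounds: "p \<in> M0 \<Longrightarrow> 0 \<le> fst p \<and> fst p \<le> 1 \<and> 0 \<le> snd p \<and> snd p \<le> 1"
  unfolding M0_def by auto

lemma corner:
  assumes S: "square_metric_space S" and p: "p \<in> M0" and p0: "p0 \<in> M0"
    and i: "fst p \<in> {0,1}" and j: "snd p0 \<in> {0,1}"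
  shows "dist (S p) (S p0) \<le> l1 p p0"
proof -
  obtain a b where pe: "p = (a, b)" by force
  obtain c d where p0e: "p0 = (c, d)" by force
  have bd: "0 \<le> a" "a \<le> 1" "0 \<le> b" "b \<le> 1" "0 \<le> c" "c \<le> 1" "0 \<le> d" "d \<le> 1"
    using M0_bounds[OF p] M0_bounds[OF p0] pe p0e by auto
  have 1: "dist (S (a, b)) (S (a, d)) = \<bar>d - b\<bar>"
    using sms_facts(2)[OF S, of a b d] i j pe p0e bd by auto
  have 2: "dist (S (a, d)) (S (c, d)) = \<bar>c - a\<bar>"
    using sms_facts(3)[OF S, of d a c] i j pe p0e bd by auto
  have "dist (S (a, b)) (S (c, d)) \<le> dist (S (a, b)) (S (a, d)) + dist (S (a, d)) (S (c, d))"
    by (rule dist_triangle)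
  then show ?thesis using 1 2 pe p0e unfolding l1_def by auto
qed

lemma corner':
  assumes S: "square_metric_space S" and p: "p \<in> M0" and p0: "p0 \<in> M0"
    and i: "snd p \<in> {0,1}" and j: "fst p0 \<in> {0,1}"
  shows "dist (S p) (S p0) \<le> l1 p p0"
  using corner[OF S p0 p j i] by (simp add: dist_commute l1_def abs_minus_commute add.commute)

lemma same1:
  assumes S: "square_metric_space S" and p: "p \<in> M0" and p0: "p0 \<in> M0"
    and i: "fst p \<in> {0,1}" and e: "fst p0 = fst p"
  shows "dist (S p) (S p0) \<le> l1 p p0"
proof -
  obtain a b where pe: "p = (a, b)" by force
  obtain c d where p0e: "p0 = (c, d)" by force
  have bd: "0 \<le> a" "a \<le> 1" "0 \<le> b" "b \<le> 1" "0 \<le> c" "c \<le> 1" "0 \<le> d" "d \<le> 1"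
    using M0_bounds[OF p] M0_bounds[OF p0] pe p0e by auto
  have 1: "dist (S (a, b)) (S (a, d)) = \<bar>d - b\<bar>"
    using sms_facts(2)[OF S, of a b d] i pe p0e bd by auto
  then show ?thesis using pe p0e e unfolding l1_def by auto
qed

lemma same2:
  assumes S: "square_metric_space S" and p: "p \<in> M0" and p0: "p0 \<in> M0"
    and i: "snd p \<in> {0,1}" and e: "snd p0 = snd p"
  shows "dist (S p) (S p0) \<le> l1 p p0"
proof -
  obtain a b where pe: "p = (a, b)" by force
  obtain c d where p0e: "p0 = (c, d)" by force
  have bd: "0 \<le> a" "a \<le> 1" "0 \<le> b" "b \<le> 1" "0 \<le> c" "c \<le> 1" "0 \<le> d" "d \<le> 1"
    using M0_bounds[OF p] M0_bounds[OF p0] pe p0e by auto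
  have 1: "dist (S (a, b)) (S (c, b)) = \<bar>c - a\<bar>"
    using sms_facts(3)[OF S, of b a c] i pe p0e bd by auto
  then show ?thesis using pe p0e e unfolding l1_def by auto
qed

lemma adj_cases:
  assumes "adjacent m n"
  shows "(fst n = fst m + 1 \<and> snd n = snd m) \<or> (fst n = fst m - 1 \<and> snd n = snd m) \<or>
         (fst n = fst m \<and> snd n = snd m + 1) \<or> (fst n = fst m \<and> snd n = snd m - 1)"
  using assms unfolding adjacent_def by arith

lemma faces_coords:
  assumes "faces m n0 p"
  shows "fst n0 = fst m + 1 \<Longrightarrow> fst p = 1" "fst n0 = fst m - 1 \<Longrightarrow> fst p = 0"
    "snd n0 = snd m + 1 \<Longrightarrow> snd p = 1" "snd n0 = snd m - 1 \<Longrightarrow> snd p = 0"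
  using assms M0_bounds[of p] unfolding faces_def by auto

lemma side:
  assumes S: "square_metric_space S" and a0: "adjacent m n0" and a1: "adjacent m n"
    and d: "dotp m n n0 \<ge> 0" and f0: "faces m n0 p" and f1: "faces m n p0"
  shows "dist (S p) (S p0) \<le> l1 p p0"
proof -
  have p: "p \<in> M0" and p0: "p0 \<in> M0" using f0 f1 unfolding faces_def by auto
  note F0 = faces_coords[OF f0] and F1 = faces_coords[OF f1]
  from adj_cases[OF a0] adj_cases[OF a1] d show ?thesis
    apply (elim disjE conjE)
    using F0 F1 same1[OF S p p0] same2[OF S p p0] corner[OF S p p0] corner'[OF S p p0]
    by (auto simp: dotp_def)
qed

lemma Mset_bounds: "n \<in> Mset \<Longrightarrow> 0 \<le> fst n \<and> fst n \<le> 2 \<and> 0 \<le> snd n \<and> snd n \<le> 2 \<and> \<not> (fst n = 1 \<and> snd n = 1)"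
  unfolding Mset_def Nset_def by auto

lemma far:
  assumes m: "m \<in> Mset" and a: "a \<in> Mset" and b: "b \<in> Mset" and n0: "n0 \<in> Mset"
    and a0: "adjacent m n0" and ab: "adjacent a b" and am: "a \<noteq> m"
    and d1: "dotp m a n0 \<ge> 0" and d2: "dotp m b n0 < 0"
    and f: "faces m n0 p'" and p: "p \<in> M0" and q: "q \<in> M0" and t: "tpos a p = tpos b q"
  shows "2 \<le> l1 (tpos m p') (tpos a p)"
proof -
  have I: "(fst n0 - fst m = 1 \<and> fst b = fst a - 1 \<and> fst a = fst m \<and> \<bar>snd a - snd m\<bar> = 2 \<and> snd b = snd a) \<or>
         (fst n0 - fst m = -1 \<and> fst b = fst a + 1 \<and> fst a = fst m \<and> \<bar>snd a - snd m\<bar> = 2 \<and> snd b = snd a) \<or>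
         (snd n0 - snd m = 1 \<and> snd b = snd a - 1 \<and> snd a = snd m \<and> \<bar>fst a - fst m\<bar> = 2 \<and> fst b = fst a) \<or>
         (snd n0 - snd m = -1 \<and> snd b = snd a + 1 \<and> snd a = snd m \<and> \<bar>fst a - fst m\<bar> = 2 \<and> fst b = fst a)"
    apply (rule far_int)
    using Mset_bounds[OF m] Mset_bounds[OF a] Mset_bounds[OF b] Mset_bounds[OF n0] a0 ab am d1 d2
    unfolding adjacent_def dotp_def by (auto simp: prod_eq_iff)
  have pb: "0 \<le> fst p" "fst p \<le> 1" "0 \<le> snd p" "snd p \<le> 1"
    "0 \<le> fst q" "fst q \<le> 1" "0 \<le> snd q" "snd q \<le> 1"
    "0 \<le> fst p'" "fst p' \<le> 1" "0 \<le> snd p'" "snd p' \<le> 1"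
    using M0_bounds[OF p] M0_bounds[OF q] M0_bounds f unfolding faces_def by auto
  have t1: "real_of_int (fst a) + fst p = real_of_int (fst b) + fst q"
    and t2: "real_of_int (snd a) + snd p = real_of_int (snd b) + snd q"
    using t unfolding tpos_def by auto
  note F = faces_coords[OF f]
  from I show ?thesis
  proof (elim disjE conjE)
    assume h: "fst n0 - fst m = 1" "fst b = fst a - 1" "fst a = fst m" "\<bar>snd a - snd m\<bar> = 2" "snd b = snd a"
    have "\<bar>real_of_int (snd a) - real_of_int (snd m)\<bar> = 2" using h(4) by (metis of_int_abs of_int_diff of_int_numeral)
    moreover have "fst p' = 1" using F h by auto
    moreover have "real_of_int (fst b) = real_of_int (fst a) - 1" using h by simp
    ultimately show ?thesis using pb t1 t2 h unfolding l1_def tpos_def by auto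
  next
    assume h: "fst n0 - fst m = -1" "fst b = fst a + 1" "fst a = fst m" "\<bar>snd a - snd m\<bar> = 2" "snd b = snd a"
    have "\<bar>real_of_int (snd a) - real_of_int (snd m)\<bar> = 2" using h(4) by (metis of_int_abs of_int_diff of_int_numeral)
    moreover have "fst p' = 0" using F h by auto
    moreover have "real_of_int (fst b) = real_of_int (fst a) + 1" using h by simp
    ultimately show ?thesis using pb t1 t2 h unfolding l1_def tpos_def by auto
  next
    assume h: "snd n0 - snd m = 1" "snd b = snd a - 1" "snd a = snd m" "\<bar>fst a - fst m\<bar> = 2" "fst b = fst a"
    have "\<bar>real_of_int (fst a) - real_of_int (fst m)\<bar> = 2" using h(4) by (metis of_int_abs of_int_diff of_int_numeral)
    moreover have "snd p' = 1" using F h by auto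
    moreover have "real_of_int (snd b) = real_of_int (snd a) - 1" using h by simp
    ultimately show ?thesis using pb t1 t2 h unfolding l1_def tpos_def by auto
  next
    assume h: "snd n0 - snd m = -1" "snd b = snd a + 1" "snd a = snd m" "\<bar>fst a - fst m\<bar> = 2" "fst b = fst a"
    have "\<bar>real_of_int (fst a) - real_of_int (fst m)\<bar> = 2" using h(4) by (metis of_int_abs of_int_diff of_int_numeral)
    moreover have "snd p' = 0" using F h by auto
    moreover have "real_of_int (snd b) = real_of_int (snd a) + 1" using h by simp
    ultimately show ?thesis using pb t1 t2 h unfolding l1_def tpos_def by auto
  qed
qed

definition Elems :: "(real \<times> real \<Rightarrow> 'a::metric_space) \<Rightarrow> int \<times> int \<Rightarrow> 'a \<Rightarrow> int \<times> int \<Rightarrow> 'a \<Rightarrow> real set" where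
  "Elems S m x n u = {dist x (S p) / 3 - l1 (tpos m p) (tpos n q) / 3 - dist u (S q) / 3 | p n0 q.
      n0 \<in> Mset \<and> adjacent m n0 \<and> dotp m n n0 \<ge> 0 \<and> faces m n0 p \<and> q \<in> M0}"

definition psi :: "(real \<times> real \<Rightarrow> 'a::metric_space) \<Rightarrow> int \<times> int \<Rightarrow> 'a \<Rightarrow> (int \<times> int) \<times> 'a \<Rightarrow> real" where
  "psi S m x z = (if fst z = m then dist x (snd z) / 3 else Sup (insert 0 (Elems S m x (fst z) (snd z))))"

lemma l1_nonneg: "0 \<le> l1 P Q" unfolding l1_def by auto

lemma elem_le:
  assumes S: "square_metric_space S" and e: "e \<in> Elems S m x n u"
  shows "e \<le> 2/3"
proof -
  from e obtain p q where "e = dist x (S p) / 3 - l1 (tpos m p) (tpos n q) / 3 - dist u (S q) / 3"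
    unfolding Elems_def by blast
  moreover have "dist x (S p) \<le> 2" by (rule sms_facts(1)[OF S])
  ultimately show ?thesis using l1_nonneg[of "tpos m p" "tpos n q"] zero_le_dist[of u "S q"] by linarith
qed

lemma bdd: "square_metric_space S \<Longrightarrow> bdd_above (insert 0 (Elems S m x n u))"
  unfolding bdd_above_def using elem_le by (metis insert_iff zero_le_divide_iff zero_le_numeral)

lemma sup_ge0: "square_metric_space S \<Longrightarrow> 0 \<le> Sup (insert 0 (Elems S m x n u))"
  by (rule cSup_upper[OF _ bdd]) auto

lemma sup_upper: "square_metric_space S \<Longrightarrow> e \<in> Elems S m x n u \<Longrightarrow> e \<le> Sup (insert 0 (Elems S m x n u))"
  by (rule cSup_upper[OF _ bdd]) auto

lemma sup_le23: "square_metric_space S \<Longrightarrow> Sup (insert 0 (Elems S m x n u)) \<le> 2/3"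
  by (rule cSup_least) (auto dest: elem_le)

lemma psi_range:
  assumes S: "square_metric_space S"
  shows "0 \<le> psi S m x z \<and> psi S m x z \<le> 2/3"
  using sup_ge0[OF S] sup_le23[OF S] sms_facts(1)[OF S, of x "snd z"] unfolding psi_def by auto

lemma psi_lip:
  assumes S: "square_metric_space S"
  shows "psi S m x (n, v) \<le> psi S m x (n, u) + dist u v / 3"
proof (cases "n = m")
  case True
  then show ?thesis unfolding psi_def using dist_triangle[of x v u] by (simp add: dist_commute)
next
  case False
  have "Sup (insert 0 (Elems S m x n v)) \<le> Sup (insert 0 (Elems S m x n u)) + dist u v / 3"
  proof (rule cSup_least)
    show "insert 0 (Elems S m x n v) \<noteq> {}" by simp
    fix e assume "e \<in> insert 0 (Elems S m x n v)"
    then show "e \<le> Sup (insert 0 (Elems S m x n u)) + dist u v / 3"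
    proof
      assume "e = 0" then show ?thesis using sup_ge0[OF S, of m x n u] zero_le_dist[of u v] by linarith
    next
      assume "e \<in> Elems S m x n v"
      then obtain p n0 q where pq: "n0 \<in> Mset \<and> adjacent m n0 \<and> dotp m n n0 \<ge> 0 \<and> faces m n0 p \<and> q \<in> M0"
        and ee: "e = dist x (S p) / 3 - l1 (tpos m p) (tpos n q) / 3 - dist v (S q) / 3"
        unfolding Elems_def by blast
      define e' where "e' = dist x (S p) / 3 - l1 (tpos m p) (tpos n q) / 3 - dist u (S q) / 3"
      have "e' \<in> Elems S m x n u" unfolding Elems_def e'_def using pq by blast
      then have "e' \<le> Sup (insert 0 (Elems S m x n u))" by (rule sup_upper[OF S])
      moreover have "dist u (S q) \<le> dist u v + dist v (S q)" by (rule dist_triangle)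
      ultimately show ?thesis unfolding ee e'_def by linarith
    qed
  qed
  then show ?thesis using False unfolding psi_def by simp
qed

lemma elem_exact:
  assumes S: "square_metric_space S" and q0: "q0 \<in> M0" and e: "e \<in> Elems S m x n (S q0)"
  shows "\<exists>p n0. n0 \<in> Mset \<and> adjacent m n0 \<and> dotp m n n0 \<ge> 0 \<and> faces m n0 p \<and>
     e \<le> dist x (S p) / 3 - l1 (tpos m p) (tpos n q0) / 3"
proof -
  from e obtain p n0 q where pq: "n0 \<in> Mset \<and> adjacent m n0 \<and> dotp m n n0 \<ge> 0 \<and> faces m n0 p \<and> q \<in> M0"
    and ee: "e = dist x (S p) / 3 - l1 (tpos m p) (tpos n q) / 3 - dist (S q0) (S q) / 3"
    unfolding Elems_def by blast
  have "l1 q0 q \<le> dist (S q0) (S q)" using sms_facts(4)[OF S q0] pq by blast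
  moreover have "l1 (tpos m p) (tpos n q0) \<le> l1 (tpos m p) (tpos n q) + l1 q0 q"
    unfolding l1_def tpos_def by auto
  ultimately show ?thesis using pq ee by (intro exI[of _ p] exI[of _ n0]) auto
qed

lemma adj_sym: "adjacent a b \<Longrightarrow> adjacent b a"
  unfolding adjacent_def by auto

lemma adj_neq: "adjacent a b \<Longrightarrow> a \<noteq> b"
  unfolding adjacent_def by auto

lemma gen_le:
  assumes S: "square_metric_space S" and m: "m \<in> Mset" and a: "a \<in> Mset" and b: "b \<in> Mset"
    and ab: "adjacent a b" and p: "p \<in> M0" and q: "q \<in> M0" and t: "tpos a p = tpos b q"
  shows "psi S m x (a, S p) \<le> psi S m x (b, S q)"
proof -
  have t1: "real_of_int (fst a) + fst p = real_of_int (fst b) + fst q"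
    and t2: "real_of_int (snd a) + snd p = real_of_int (snd b) + snd q"
    using t unfolding tpos_def by auto
  have qb: "0 \<le> fst q" "fst q \<le> 1" "0 \<le> snd q" "snd q \<le> 1"
    and pb: "0 \<le> fst p" "fst p \<le> 1" "0 \<le> snd p" "snd p \<le> 1"
    using M0_bounds[OF q] M0_bounds[OF p] by auto
  show ?thesis
  proof (cases "a = m")
    case True
    then have bm: "b \<noteq> m" using adj_neq[OF ab] by auto
    have "faces m b p" unfolding faces_def using p qb t1 t2 True by auto
    moreover have "dotp m b b \<ge> 0" unfolding dotp_def by auto
    ultimately have "dist x (S p) / 3 - l1 (tpos m p) (tpos b q) / 3 - dist (S q) (S q) / 3 \<in> Elems S m x b (S q)"
      unfolding Elems_def using b ab True q by blast
    moreover have "l1 (tpos m p) (tpos b q) = 0" using t True unfolding l1_def by simp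
    ultimately have "dist x (S p) / 3 \<le> Sup (insert 0 (Elems S m x b (S q)))"
      using sup_upper[OF S] by fastforce
    then show ?thesis unfolding psi_def using True bm by simp
  next
    case am: False
    show ?thesis
    proof (cases "b = m")
      case True
      have "Sup (insert 0 (Elems S m x a (S p))) \<le> dist x (S q) / 3"
      proof (rule cSup_least)
        show "insert 0 (Elems S m x a (S p)) \<noteq> {}" by simp
        fix e assume "e \<in> insert 0 (Elems S m x a (S p))"
        then show "e \<le> dist x (S q) / 3"
        proof
          assume "e = 0" then show ?thesis by simp
        next
          assume "e \<in> Elems S m x a (S p)"
          from elem_exact[OF S p this] obtain p' n0 where
            h: "n0 \<in> Mset" "adjacent m n0" "dotp m a n0 \<ge> 0" "faces m n0 p'"
               "e \<le> dist x (S p') / 3 - l1 (tpos m p') (tpos a p) / 3" by blast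
          have fq: "faces m a q" unfolding faces_def using q pb t1 t2 True by auto
          have "dist (S p') (S q) \<le> l1 p' q"
            using side[OF S h(2) _ h(3) h(4) fq] adj_sym[OF ab] True by blast
          moreover have "l1 (tpos m p') (tpos a p) = l1 p' q" using t True unfolding l1_def tpos_def by auto
          moreover have "dist x (S p') \<le> dist x (S q) + dist (S q) (S p')" by (rule dist_triangle)
          ultimately show ?thesis using h(5) by (simp add: dist_commute)
        qed
      qed
      then show ?thesis unfolding psi_def using True am by simp
    next
      case bm: False
      have "Sup (insert 0 (Elems S m x a (S p))) \<le> Sup (insert 0 (Elems S m x b (S q)))"
      proof (rule cSup_least)
        show "insert 0 (Elems S m x a (S p)) \<noteq> {}" by simp
        fix e assume "e \<in> insert 0 (Elems S m x a (S p))"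
        then show "e \<le> Sup (insert 0 (Elems S m x b (S q)))"
        proof
          assume "e = 0" then show ?thesis using sup_ge0[OF S] by simp
        next
          assume "e \<in> Elems S m x a (S p)"
          from elem_exact[OF S p this] obtain p' n0 where
            h: "n0 \<in> Mset" "adjacent m n0" "dotp m a n0 \<ge> 0" "faces m n0 p'"
               "e \<le> dist x (S p') / 3 - l1 (tpos m p') (tpos a p) / 3" by blast
          show ?thesis
          proof (cases "dotp m b n0 \<ge> 0")
            case True
            then have "dist x (S p') / 3 - l1 (tpos m p') (tpos b q) / 3 - dist (S q) (S q) / 3 \<in> Elems S m x b (S q)"
              unfolding Elems_def using h q by blast
            then have "dist x (S p') / 3 - l1 (tpos m p') (tpos b q) / 3 \<le> Sup (insert 0 (Elems S m x b (S q)))"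
              using sup_upper[OF S] by fastforce
            then show ?thesis using h(5) t by simp
          next
            case False
            then have "2 \<le> l1 (tpos m p') (tpos a p)"
              using far[OF m a b h(1) h(2) ab am h(3) _ h(4) p q t] by simp
            moreover have "dist x (S p') \<le> 2" by (rule sms_facts(1)[OF S])
            ultimately have "e \<le> 0" using h(5) by linarith
            then show ?thesis using sup_ge0[OF S, of m x b "S q"] by linarith
          qed
        qed
      qed
      then show ?thesis unfolding psi_def using am bm by simp
    qed
  qed
qed

lemma gen_eq:
  assumes S: "square_metric_space S" and m: "m \<in> Mset" and zw: "(z, w) \<in> glue_gen S"
  shows "psi S m x z = psi S m x w"
proof -
  obtain a u where zz: "z = (a, u)" by (cases z) blast
  obtain b v where ww: "w = (b, v)" by (cases w) blast
  from zw obtain p q where h: "a \<in> Mset" "b \<in> Mset" "adjacent a b" "p \<in> M0" "q \<in> M0" "u = S p" "v = S q"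
    "(real_of_int (fst a) + fst p) / 3 = (real_of_int (fst b) + fst q) / 3"
    "(real_of_int (snd a) + snd p) / 3 = (real_of_int (snd b) + snd q) / 3"
    unfolding glue_gen_def zz ww by blast
  have t: "tpos a p = tpos b q" using h(8,9) unfolding tpos_def by auto
  show ?thesis
    using gen_le[OF S m h(1,2,3,4,5) t, of x] gen_le[OF S m h(2,1) adj_sym[OF h(3)] h(5,4) t[symmetric], of x]
      zz ww h(6,7) by simp
qed

lemma equiv_eq:
  assumes S: "square_metric_space S" and m: "m \<in> Mset" and zw: "(z, w) \<in> glue_equiv S"
  shows "psi S m x z = psi S m x w"
  using zw unfolding glue_equiv_def
proof (induction rule: rtrancl_induct)
  case base then show ?case by simp
next
  case (step y w)
  then show ?case using gen_eq[OF S m, of y w x] gen_eq[OF S m, of w y x] by auto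
qed

lemma step_le:
  assumes S: "square_metric_space S" and m: "m \<in> Mset"
  shows "psi S m x w - psi S m x z \<le> step_cost S z w"
proof (cases "(z, w) \<in> glue_equiv S")
  case True
  then show ?thesis using equiv_eq[OF S m True] unfolding step_cost_def by simp
next
  case False
  show ?thesis
  proof (cases "fst z = fst w")
    case True
    obtain n u where zz: "z = (n, u)" by (cases z) blast
    obtain v where ww: "w = (n, v)" using True zz by (metis prod.collapse fst_conv)
    show ?thesis using psi_lip[OF S, of m x n v u] False unfolding step_cost_def dM_def zz ww by simp
  next
    case ne: False
    show ?thesis using psi_range[OF S, of m x z] psi_range[OF S, of m x w] False ne
      unfolding step_cost_def dM_def by simp
  qed
qed

theorem mainTheorem12:
  fixes S :: "real \<times> real \<Rightarrow> 'a::metric_space"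
    and m :: "int \<times> int" and x y :: 'a
    and zs :: "((int \<times> int) \<times> 'a) list"
  assumes "square_metric_space S"
    and "m \<in> Mset"
    and "zs \<noteq> []"
    and "set zs \<subseteq> Mset \<times> UNIV"
    and "hd zs = (m, x)"
    and "last zs = (m, y)"
  shows "score S zs \<ge> dist x y / 3"
proof -
  let ?f = "\<lambda>i. psi S m x (zs ! i)"
  have "(\<Sum>i < length zs - 1. ?f (Suc i) - ?f i) \<le> score S zs"
    unfolding score_def by (rule sum_mono) (rule step_le[OF assms(1,2)])
  moreover have "(\<Sum>i < length zs - 1. ?f (Suc i) - ?f i) = ?f (length zs - 1) - ?f 0"
    by (rule sum_lessThan_telescope)
  moreover have "zs ! 0 = (m, x)" using assms(3,5) by (simp add: hd_conv_nth)
  moreover have "zs ! (length zs - 1) = (m, y)" using assms(3,6) by (simp add: last_conv_nth)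
  ultimately show ?thesis unfolding psi_def by simp
qed

end
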